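(* Let $\gamma,z\in\mathbb{R}$ with $1+\gamma z>0$, and let $D(\gamma,z)=\int_0^z\frac{t}{(1+\gamma t)^2}\,dt$. If $\gamma z>0$, then \[D(\gamma,z)\le\frac{z^2}{2}\quad\text{and}\quad D(\gamma,z)\le\frac1\gamma\log(1+\gamma z)\frac{z}{1+\gamma z}\le\min\Big\{\frac{z^2}{1+\gamma z},\ \frac1{\gamma^2}\log(1+\gamma z)\Big\}.\] If $-1<\gamma z<0$, then $D(\gamma,z)\le\frac{z^2}{1+\gamma z}$. Consequently, for all $\gamma,z$ with $1+\gamma z>0$, $0\le D(\gamma,z)\le \frac{z^2}{1+\gamma z}$.
   Context: $D(\gamma,z)$ equals $\partial_\gamma\log u_\gamma(z)$, where $u_\gamma(z)=\exp(-\int_0^z(1+\gamma t)^{-1}dt)$, i.e. $(1+\gamma z)^{-1/\gamma}$ for $\gamma\ne0$ and $e^{-z}$ for $\gamma=0$. *)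

theory Defs
  imports "HOL-Analysis.Analysis"
begin

definition D :: "real \<Rightarrow> real \<Rightarrow> real" where
  "D \<gamma> z = (if 0 \<le> z then integral {0..z} (\<lambda>t. t / (1 + \<gamma> * t)^2)
              else - integral {z..0} (\<lambda>t. t / (1 + \<gamma> * t)^2))"

end

theory Submission
  imports Defs
begin

definition FF :: "real \<Rightarrow> real \<Rightarrow> real" where
  "FF g t = (if g = 0 then t^2/2 else (ln (1 + g*t) + 1/(1 + g*t)) / g^2)"

lemma FF_deriv:
  assumes "1 + g*t > 0"
  shows "(FF g has_real_derivative t / (1 + g*t)^2) (at t)"
proof (cases "g = 0")
  case True
  have "((\<lambda>t. t^2/2) has_real_derivative t) (at t)"
    by (auto intro!: derivative_eq_intros)
  then show ?thesis using True by (simp add: FF_def[abs_def])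
next
  case False
  have l: "((\<lambda>t. ln (1 + g*t)) has_real_derivative g / (1 + g*t)) (at t)"
    using assms by (auto intro!: derivative_eq_intros)
  have r: "((\<lambda>t. 1/(1 + g*t)) has_real_derivative - g / (1+g*t)^2) (at t)"
    using assms by (auto intro!: derivative_eq_intros simp: power2_eq_square)
  have d: "((\<lambda>t. (ln (1 + g*t) + 1/(1 + g*t)) / g^2) has_real_derivative
        ((g / (1 + g*t) - g / (1+g*t)^2) / g^2)) (at t)"
    using DERIV_cdivide[OF DERIV_add[OF l r], of "g^2"] by simp
  have e: "(g / (1 + g*t) - g / (1+g*t)^2) / g^2 = t / (1 + g*t)^2"
  proof -
    define w where "w = 1 + g*t"
    have w: "w > 0" "t = (w-1)/g" using assms False w_def by auto
    have "(g / w - g / w^2) / g^2 = ((w-1)/g) / w^2"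
      using w(1) False by (simp add: field_simps power2_eq_square)
    then show ?thesis unfolding w_def using False by simp
  qed
  have "FF g = (\<lambda>t. (ln (1 + g*t) + 1/(1 + g*t)) / g^2)"
    using False by (auto simp: FF_def[abs_def])
  then show ?thesis using d e by simp
qed

lemma FF_int:
  assumes "a \<le> b" "\<And>t. t \<in> {a..b} \<Longrightarrow> 1 + g*t > 0"
  shows "integral {a..b} (\<lambda>t. t / (1 + g*t)^2) = FF g b - FF g a"
proof -
  have "((\<lambda>t. t / (1 + g*t)^2) has_integral FF g b - FF g a) {a..b}"
    apply (rule fundamental_theorem_of_calculus[OF assms(1)])
    using FF_deriv assms(2)
    by (metis has_field_derivative_at_within has_real_derivative_iff_has_vector_derivative)
  then show ?thesis by (rule integral_unique)
qed

lemma D_eq: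
  assumes "1 + g*z > 0"
  shows "D g z = FF g z - FF g 0"
proof (cases "0 \<le> z")
  case True
  have "\<And>t. t \<in> {0..z} \<Longrightarrow> 1 + g*t > 0"
  proof -
    fix t assume t: "t \<in> {0..z}"
    show "1 + g*t > 0"
    proof (cases "g \<ge> 0")
      case True then show ?thesis using t by (simp add: add_pos_nonneg)
    next
      case False
      then have "g*t \<ge> g*z" using t by (simp add: mult_left_mono_neg)
      then show ?thesis using assms by linarith
    qed
  qed
  then show ?thesis using True FF_int[of 0 z g] by (simp add: D_def)
next
  case False
  have "\<And>t. t \<in> {z..0} \<Longrightarrow> 1 + g*t > 0"
  proof -
    fix t assume t: "t \<in> {z..0}"
    show "1 + g*t > 0"
    proof (cases "g \<le> 0")
      case True then have "g*t \<ge> 0" using t by (simp add: mult_nonpos_nonpos)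
      then show ?thesis by linarith
    next
      case False
      then have "g*t \<ge> g*z" using t by (simp add: mult_left_mono)
      then show ?thesis using assms by linarith
    qed
  qed
  then show ?thesis using False FF_int[of z 0 g] by (simp add: D_def)
qed

lemma D_closed:
  assumes "1 + g*z > 0" "g \<noteq> 0"
  shows "D g z = (ln (1 + g*z) + 1/(1+g*z) - 1) / g^2"
  using D_eq[OF assms(1)] assms(2) by (simp add: FF_def diff_divide_distrib)

lemma D_zero: "D 0 z = z^2/2"
  using D_eq[of 0 z] by (simp add: FF_def)

lemma g_upper:
  fixes u :: real
  assumes "u \<ge> 0"
  shows "ln (1+u) - u/(1+u) \<le> u^2/2"
proof -
  let ?h = "\<lambda>u::real. u^2/2 - ln (1+u) + u/(1+u)"
  have "?h 0 \<le> ?h u"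
  proof (rule DERIV_nonneg_imp_nondecreasing[OF assms])
    fix x :: real assume x: "0 \<le> x" "x \<le> u"
    have "(?h has_real_derivative (x - 1/(1+x) + 1/(1+x)^2)) (at x)"
      using x by (auto intro!: derivative_eq_intros simp: power2_eq_square field_simps)
    moreover have "x - 1/(1+x) + 1/(1+x)^2 \<ge> 0"
    proof -
      have e: "- 1/(1+x) + 1/(1+x)^2 = - (x/(1+x)^2)"
      proof -
        define w where "w = 1 + x"
        have w: "w > 0" "x = w - 1" using x w_def by auto
        have "- 1/w + 1/w^2 = - ((w-1)/w^2)" using w(1) by (simp add: field_simps power2_eq_square)
        then show ?thesis unfolding w_def by simp
      qed
      have "1 \<le> (1+x)^2" using x by (simp add: one_le_power)
      then have "x/(1+x)^2 \<le> x" using x by (simp add: divide_le_eq mult_le_cancel_left1) 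
      then show ?thesis using e by linarith
    qed
    ultimately show "\<exists>y. (?h has_real_derivative y) (at x) \<and> 0 \<le> y" by blast
  qed
  then show ?thesis by simp
qed

lemma g_lower:
  fixes u :: real
  assumes "u > -1"
  shows "u/(1+u) \<le> ln (1+u)"
proof -
  have "ln (1/(1+u)) \<le> 1/(1+u) - 1" using assms by (intro ln_le_minus_one) auto
  moreover have "ln (1/(1+u)) = - ln (1+u)" using assms by (simp add: ln_div)
  moreover have "1/(1+u) - 1 = - (u/(1+u))" using assms by (simp add: field_simps)
  ultimately show ?thesis by linarith
qed

lemma g_up2:
  fixes u :: real
  assumes "u > -1"
  shows "ln (1+u) \<le> u"
  using ln_le_minus_one[of "1+u"] assms by simp

theorem lemmaB1:
  fixes \<gamma> z :: real
  assumes "1 + \<gamma> * z > 0"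
  shows "(\<gamma> * z > 0 \<longrightarrow>
            D \<gamma> z \<le> z^2 / 2 \<and>
            D \<gamma> z \<le> (1 / \<gamma>) * ln (1 + \<gamma> * z) * (z / (1 + \<gamma> * z)) \<and>
            (1 / \<gamma>) * ln (1 + \<gamma> * z) * (z / (1 + \<gamma> * z))
              \<le> min (z^2 / (1 + \<gamma> * z)) ((1 / \<gamma>^2) * ln (1 + \<gamma> * z)))
       \<and> (-1 < \<gamma> * z \<and> \<gamma> * z < 0 \<longrightarrow> D \<gamma> z \<le> z^2 / (1 + \<gamma> * z))
       \<and> (0 \<le> D \<gamma> z \<and> D \<gamma> z \<le> z^2 / (1 + \<gamma> * z))"
proof (cases "\<gamma> = 0")
  case True
  then show ?thesis by (simp add: D_zero)
next
  case False
  define u where "u = \<gamma> * z"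
  define L where "L = ln (1 + u)"
  have u1: "1 + u > 0" using assms u_def by simp
  have low: "u/(1+u) \<le> L" using g_lower u1 L_def by simp
  have up: "L \<le> u" using g_up2 u1 L_def by simp
  have low': "u \<le> L * (1+u)" using low u1 by (simp add: field_simps)
  have Dz: "D \<gamma> z = (L + 1/(1+u) - 1) / \<gamma>^2"
    using D_closed[OF assms False] u_def L_def by simp
  have g2: "\<gamma>^2 > 0" using False by simp
  have zz: "z^2 = u^2 / \<gamma>^2" using False u_def by (simp add: field_simps power2_eq_square)
  have e1: "L + 1/(1+u) - 1 = (L*(1+u) - u)/(1+u)" using u1 by (simp add: field_simps)
  have D_nonneg: "0 \<le> D \<gamma> z" unfolding Dz e1 using low' u1 g2 by simp
  have key: "L*(1+u) - u \<le> u^2"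
  proof -
    have "L*(1+u) \<le> u*(1+u)" using up u1 by (simp add: mult_right_mono)
    then show ?thesis by (simp add: algebra_simps power2_eq_square)
  qed
  have D_up: "D \<gamma> z \<le> z^2 / (1 + \<gamma> * z)"
  proof -
    have "(L*(1+u) - u)/(1+u) \<le> u^2/(1+u)" using key u1 by (simp add: divide_right_mono)
    then have "D \<gamma> z \<le> u^2/(1+u)/\<gamma>^2" unfolding Dz e1 by (rule divide_right_mono) (use g2 in simp)
    also have "\<dots> = z^2/(1 + \<gamma> * z)" using zz u_def by simp
    finally show ?thesis .
  qed
  have pos: "\<gamma> * z > 0 \<longrightarrow>
            D \<gamma> z \<le> z^2 / 2 \<and>
            D \<gamma> z \<le> (1 / \<gamma>) * ln (1 + \<gamma> * z) * (z / (1 + \<gamma> * z)) \<and>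
            (1 / \<gamma>) * ln (1 + \<gamma> * z) * (z / (1 + \<gamma> * z))
              \<le> min (z^2 / (1 + \<gamma> * z)) ((1 / \<gamma>^2) * ln (1 + \<gamma> * z))"
  proof
    assume up0: "\<gamma> * z > 0"
    then have u0: "u > 0" using u_def by simp
    have Lnn: "L \<ge> 0" using low u0 by (smt (verit) divide_nonneg_pos)
    have E: "(1 / \<gamma>) * ln (1 + \<gamma> * z) * (z / (1 + \<gamma> * z)) = L * u / (1+u) / \<gamma>^2"
    proof -
      have zu: "z = u/\<gamma>" using False u_def by simp
      have "(1 / \<gamma>) * L * (z / (1 + u)) = L * u / (1+u) / \<gamma>^2"
        unfolding zu using False u1 by (simp add: field_simps power2_eq_square)
      then show ?thesis using L_def u_def by simp
    qed
    have a: "D \<gamma> z \<le> z^2/2"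
    proof -
      have "L + 1/(1+u) - 1 = L - u/(1+u)" using u1 by (simp add: field_simps)
      also have "\<dots> \<le> u^2/2" using g_upper[of u] u0 L_def by simp
      finally have "D \<gamma> z \<le> u^2/2/\<gamma>^2" unfolding Dz by (rule divide_right_mono) (use g2 in simp)
      then show ?thesis using zz by simp
    qed
    have b: "D \<gamma> z \<le> L * u / (1+u) / \<gamma>^2"
    proof -
      have "L*(1+u) - u \<le> L*u" using up by (simp add: algebra_simps)
      then have "(L*(1+u) - u)/(1+u) \<le> L*u/(1+u)" using u1 by (simp add: divide_right_mono)
      then show ?thesis unfolding Dz e1 by (rule divide_right_mono) (use g2 in simp)
    qed
    have c1: "L * u / (1+u) / \<gamma>^2 \<le> z^2 / (1 + \<gamma> * z)"
    proof -
      have "L*u \<le> u*u" using up u0 by (simp add: mult_right_mono)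
      then have "L*u/(1+u) \<le> u^2/(1+u)" using u1 by (simp add: divide_right_mono power2_eq_square)
      then have "L*u/(1+u)/\<gamma>^2 \<le> u^2/(1+u)/\<gamma>^2" by (rule divide_right_mono) (use g2 in simp)
      then show ?thesis using zz u_def by (simp add: ac_simps)
    qed
    have c2: "L * u / (1+u) / \<gamma>^2 \<le> (1 / \<gamma>^2) * ln (1 + \<gamma> * z)"
    proof -
      have "u/(1+u) \<le> 1" using u1 by simp
      then have "L * u / (1+u) \<le> L" using Lnn mult_left_le[of "u/(1+u)" L] by simp
      then have "L*u/(1+u)/\<gamma>^2 \<le> L/\<gamma>^2" by (rule divide_right_mono) (use g2 in simp)
      then show ?thesis using L_def u_def by simp
    qed
    show "D \<gamma> z \<le> z^2 / 2 \<and>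
            D \<gamma> z \<le> (1 / \<gamma>) * ln (1 + \<gamma> * z) * (z / (1 + \<gamma> * z)) \<and>
            (1 / \<gamma>) * ln (1 + \<gamma> * z) * (z / (1 + \<gamma> * z))
              \<le> min (z^2 / (1 + \<gamma> * z)) ((1 / \<gamma>^2) * ln (1 + \<gamma> * z))"
      unfolding E using a b c1 c2 by simp
  qed
  show ?thesis using pos D_up D_nonneg by blast
qed

end
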